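(* Let $K\ge 1$, let $u_1,\dots,u_K\in\mathbb{R}$, and write $u_k^+=\max\{u_k,0\}$, $u_k^-=\max\{-u_k,0\}$, $S_+=\sum_{k=1}^K u_k^+$, $S_-=\sum_{k=1}^K u_k^-$ and $s=\sum_{k=1}^K u_k$. Fix $\eta>0$, $\sigma_z^2>0$ and $\mu_1,\dots,\mu_K>0$. Let $h_{k,+},h_{k,-}$ ($k=1,\dots,K$) be independent with $h_{k,\pm}\sim\mathcal{CN}(0,\mu_k^2)$ (so $\mu_k^2=\mathbb{E}|h_{k,\pm}|^2$), let $z_+,z_-\sim\mathcal{CN}(0,\sigma_z^2)$ be independent, and let $\phi_{k,\pm}\sim\mathrm{Unif}[0,2\pi)$ be independent across clients and branches; all of these random variables are mutually independent. Define the transmitted symbols $$a_{k,+}=\frac{\sqrt{\eta u_k^+}}{\mu_k}e^{\mathrm{i}\phi_{k,+}},\qquad a_{k,-}=\frac{\sqrt{\eta u_k^-}}{\mu_k}e^{\mathrm{i}\phi_{k,-}},$$ the received signals $y_\pm=\sum_{k=1}^K h_{k,\pm}a_{k,\pm}+z_\pm$, and the estimator $\hat s=\frac{|y_+|^2-|y_-|^2}{\eta}$. Then $\mathbb{E}[\hat s]=s$ and $$\mathrm{Var}(\hat s)=S_+^2+S_-^2+\frac{2\sigma_z^2}{\eta}\sum_{k=1}^K|u_k|+\frac{2\sigma_z^4}{\eta^2}.$$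
   Context: $\mathcal{CN}(0,\nu)$ denotes the circularly symmetric complex Gaussian distribution with variance $\nu$; $\mathrm{i}$ is the imaginary unit. *)

theory Defs
  imports "HOL-Probability.Probability"
begin

definition CN_density :: "real \<Rightarrow> complex \<Rightarrow> real" where
  "CN_density \<nu> z = exp (- (cmod z)\<^sup>2 / \<nu>) / (pi * \<nu>)"

definition circ_gauss :: "'a measure \<Rightarrow> real \<Rightarrow> ('a \<Rightarrow> complex) \<Rightarrow> bool" where
  "circ_gauss M \<nu> X \<longleftrightarrow> distributed M lborel X (\<lambda>z. ennreal (CN_density \<nu> z))"

definition unif_phase :: "'a measure \<Rightarrow> ('a \<Rightarrow> real) \<Rightarrow> bool" where
  "unif_phase M X \<longleftrightarrow>
     distributed M lborel X (\<lambda>x. ennreal (indicator {0..<2*pi} x / (2*pi)))"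

datatype rv_idx = HP nat | HM nat | ZP | ZM | PP nat | PM nat

text \<open>All random variables collected into one complex-valued family
  (the real phases embedded via complex_of_real), to express mutual independence.\<close>
fun rv_family ::
  "(nat \<Rightarrow> 'a \<Rightarrow> complex) \<Rightarrow> (nat \<Rightarrow> 'a \<Rightarrow> complex) \<Rightarrow> ('a \<Rightarrow> complex) \<Rightarrow> ('a \<Rightarrow> complex)
   \<Rightarrow> (nat \<Rightarrow> 'a \<Rightarrow> real) \<Rightarrow> (nat \<Rightarrow> 'a \<Rightarrow> real) \<Rightarrow> rv_idx \<Rightarrow> 'a \<Rightarrow> complex" where
  "rv_family hp hm zp zm pp pm (HP k) = hp k"
| "rv_family hp hm zp zm pp pm (HM k) = hm k"
| "rv_family hp hm zp zm pp pm ZP = zp"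
| "rv_family hp hm zp zm pp pm ZM = zm"
| "rv_family hp hm zp zm pp pm (PP k) = (\<lambda>\<omega>. complex_of_real (pp k \<omega>))"
| "rv_family hp hm zp zm pp pm (PM k) = (\<lambda>\<omega>. complex_of_real (pm k \<omega>))"

definition rv_index_set :: "nat \<Rightarrow> rv_idx set" where
  "rv_index_set K = HP ` {1..K} \<union> HM ` {1..K} \<union> {ZP, ZM} \<union> PP ` {1..K} \<union> PM ` {1..K}"

end

theory Submission
  imports Defs
begin


lemma cnj_meas[measurable]: "cnj \<in> borel_measurable borel"
  by (intro borel_measurable_continuous_onI continuous_intros)

lemma CN_split:
  assumes "\<nu> > 0"
  shows "CN_density \<nu> z = normal_density 0 (sqrt (\<nu>/2)) (Re z) * normal_density 0 (sqrt (\<nu>/2)) (Im z)"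
proof -
  have s: "(sqrt (\<nu>/2))\<^sup>2 = \<nu>/2" using assms by simp
  have a: "2 * pi * (\<nu>/2) = pi * \<nu>" by simp
  have b0: "sqrt (pi * \<nu>) * sqrt (pi * \<nu>) = pi * \<nu>"
    using assms pi_gt_zero by (simp del: real_sqrt_mult)
  have b: "1 / sqrt (pi * \<nu>) * (1 / sqrt (pi * \<nu>)) = 1 / (pi * \<nu>)"
    using b0 by (simp add: divide_simps)
  have c: "exp (- (cmod z)\<^sup>2 / \<nu>) = exp (- (Re z)\<^sup>2 / (2 * (\<nu>/2))) * exp (- (Im z)\<^sup>2 / (2 * (\<nu>/2)))"
    unfolding exp_add[symmetric] cmod_power2 using assms by (simp add: field_simps)
  show ?thesis unfolding CN_density_def normal_density_def s a c
    using b by (simp add: field_simps)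
qed

lemma nn_prod2:
  assumes [measurable]: "p \<in> borel_measurable borel" "q \<in> borel_measurable borel"
    and "\<And>x. 0 \<le> p x" "\<And>x. 0 \<le> q x"
  shows "(\<integral>\<^sup>+z. ennreal (p (Re z) * q (Im z)) \<partial>lborel) = (\<integral>\<^sup>+x. ennreal (p x) \<partial>lborel) * (\<integral>\<^sup>+x. ennreal (q x) \<partial>lborel)"
proof -
  have "(\<integral>\<^sup>+(z::complex). (\<Prod>b\<in>Basis. (\<lambda>b x. ennreal (if b = 1 then p x else q x)) b (z \<bullet> b)) \<partial>lborel)
     = (\<Prod>b\<in>Basis. integral\<^sup>N lborel ((\<lambda>(b::complex) x. ennreal (if b = 1 then p x else q x)) b))"
    by (rule nn_integral_lborel_prod[of "\<lambda>(b::complex) x. ennreal (if b = 1 then p x else q x)"]) auto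
  moreover have "\<And>z::complex. (\<Prod>b\<in>Basis. (\<lambda>b x. ennreal (if b = 1 then p x else q x)) b (z \<bullet> b)) = ennreal (p (Re z) * q (Im z))"
    using assms(3,4) by (simp add: Basis_complex_def ennreal_mult inner_complex_def)
  moreover have "(\<Prod>b\<in>Basis. integral\<^sup>N lborel ((\<lambda>(b::complex) x. ennreal (if b = 1 then p x else q x)) b)) =
     (\<integral>\<^sup>+x. ennreal (p x) \<partial>lborel) * (\<integral>\<^sup>+x. ennreal (q x) \<partial>lborel)"
    by (simp add: Basis_complex_def)
  ultimately show ?thesis by simp
qed

lemma nd_moment:
  assumes "s > 0"
  shows "(\<integral>\<^sup>+x. ennreal (normal_density 0 s x * x ^ (2*k)) \<partial>lborel) = ennreal (fact (2 * k) / ((2 / s\<^sup>2)^k * fact k))"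
proof -
  have "has_bochner_integral lborel (\<lambda>x. normal_density 0 s x * x ^ (2*k)) (fact (2 * k) / ((2 / s\<^sup>2)^k * fact k))"
    using normal_moment_even[of s 0 k] assms by (simp only: diff_zero)
  then show ?thesis
    by (subst nn_integral_eq_integral)
       (auto simp: has_bochner_integral_iff zero_le_mult_iff)
qed

lemma nd_m0: "s > 0 \<Longrightarrow> (\<integral>\<^sup>+x. ennreal (normal_density 0 s x) \<partial>lborel) = 1"
  using nd_moment[of s 0] by simp
lemma nd_m2: "s > 0 \<Longrightarrow> (\<integral>\<^sup>+x. ennreal (normal_density 0 s x * x^2) \<partial>lborel) = ennreal (s\<^sup>2)"
  using nd_moment[of s 1] by simp
lemma nd_m4: "s > 0 \<Longrightarrow> (\<integral>\<^sup>+x. ennreal (normal_density 0 s x * x^4) \<partial>lborel) = ennreal (3 * s^4)"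
  using nd_moment[of s 2] by (simp add: fact_numeral power_divide field_simps)



lemma CN_meas[measurable]: "CN_density \<nu> \<in> borel_measurable borel"
  unfolding CN_density_def by measurable

lemma CN_nonneg: "\<nu> > 0 \<Longrightarrow> 0 \<le> CN_density \<nu> z"
  unfolding CN_density_def by simp

lemma cn_transfer:
  fixes F :: "complex \<Rightarrow> 'b::{banach, second_countable_topology}"
  assumes cg: "circ_gauss M \<nu> X" and nu: "\<nu> > 0" and F[measurable]: "F \<in> borel_measurable borel"
  shows "integrable M (\<lambda>\<omega>. F (X \<omega>)) \<longleftrightarrow> integrable lborel (\<lambda>z. CN_density \<nu> z *\<^sub>R F z)"
    and "(\<integral>\<omega>. F (X \<omega>) \<partial>M) = (\<integral>z. CN_density \<nu> z *\<^sub>R F z \<partial>lborel)"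
proof -
  have d: "distr M lborel X = density lborel (\<lambda>z. ennreal (CN_density \<nu> z))"
    and Xm: "X \<in> measurable M lborel"
    using cg unfolding circ_gauss_def distributed_def by auto
  have Fl: "F \<in> borel_measurable lborel" by simp
  show "integrable M (\<lambda>\<omega>. F (X \<omega>)) \<longleftrightarrow> integrable lborel (\<lambda>z. CN_density \<nu> z *\<^sub>R F z)"
    using integrable_distr_eq[OF Xm Fl, symmetric] d
      integrable_density[of F lborel "CN_density \<nu>"] CN_nonneg[OF nu] by simp
  show "(\<integral>\<omega>. F (X \<omega>) \<partial>M) = (\<integral>z. CN_density \<nu> z *\<^sub>R F z \<partial>lborel)"
    using integral_distr[OF Xm Fl, symmetric] d
      integral_density[of F lborel "CN_density \<nu>"] CN_nonneg[OF nu] by simp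
qed

lemma lborel_uminus_complex: "distr lborel borel uminus = (lborel :: complex measure)"
  using lborel_affine[of "-1" "0::complex"] by (simp add: density_1)

lemma lborel_cnj: "distr lborel borel cnj = (lborel :: complex measure)"
proof -
  have T: "(\<lambda>x::complex. 0 + (\<Sum>j\<in>Basis. ((if j = 1 then 1 else -1) * (x \<bullet> j)) *\<^sub>R j)) = cnj"
    by (auto simp: Basis_complex_def inner_complex_def complex_eq_iff fun_eq_iff)
  have P: "(\<Prod>j\<in>(Basis::complex set). \<bar>(if j = 1 then 1 else -1::real)\<bar>) = 1"
    by (simp add: Basis_complex_def)
  show ?thesis
    using lborel_affine_euclidean[where c="\<lambda>j::complex. if j = 1 then 1 else -1" and t=0]
    unfolding T P by (simp add: density_1)
qed

context
  fixes \<nu> :: real assumes nu: "\<nu> > 0"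
begin

private abbreviation "g \<equiv> normal_density 0 (sqrt (\<nu>/2))"

private lemma s2: "(sqrt (\<nu>/2))\<^sup>2 = \<nu>/2" using nu by simp
private lemma s4: "(sqrt (\<nu>/2))^4 = \<nu>^2/4"
proof -
  have "(sqrt (\<nu>/2))^4 = ((sqrt (\<nu>/2))\<^sup>2)^2" by simp
  then show ?thesis using s2 by (simp add: power_divide)
qed
private lemma sp: "sqrt (\<nu>/2) > 0" using nu by simp

private lemma nnI:
  assumes [measurable]: "p \<in> borel_measurable borel" "q \<in> borel_measurable borel"
    and "\<And>x. 0 \<le> p x" "\<And>x. 0 \<le> q x"
    and "(\<integral>\<^sup>+x. ennreal (g x * p x) \<partial>lborel) = ennreal a"
    and "(\<integral>\<^sup>+x. ennreal (g x * q x) \<partial>lborel) = ennreal b"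
    and "0 \<le> a" "0 \<le> b"
  shows "has_bochner_integral lborel (\<lambda>z. CN_density \<nu> z * (p (Re z) * q (Im z))) (a * b)"
proof (rule has_bochner_integral_nn_integral)
  show "(\<lambda>z. CN_density \<nu> z * (p (Re z) * q (Im z))) \<in> borel_measurable lborel" by simp
  show "AE x in lborel. 0 \<le> CN_density \<nu> x * (p (Re x) * q (Im x))"
    using assms(3,4) CN_nonneg[OF nu] by simp
  show "0 \<le> a * b" using assms by simp
  have "(\<integral>\<^sup>+z. ennreal (CN_density \<nu> z * (p (Re z) * q (Im z))) \<partial>lborel)
     = (\<integral>\<^sup>+z. ennreal ((g (Re z) * p (Re z)) * (g (Im z) * q (Im z))) \<partial>lborel)"
    by (simp add: CN_split[OF nu] ac_simps)
  also have "\<dots> = (\<integral>\<^sup>+x. ennreal (g x * p x) \<partial>lborel) * (\<integral>\<^sup>+x. ennreal (g x * q x) \<partial>lborel)"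
    by (rule nn_prod2) (auto simp: assms(3,4))
  also have "\<dots> = ennreal (a * b)" using assms by (simp add: ennreal_mult)
  finally show "(\<integral>\<^sup>+z. ennreal (CN_density \<nu> z * (p (Re z) * q (Im z))) \<partial>lborel) = ennreal (a * b)" .
qed

private lemma m0': "(\<integral>\<^sup>+x. ennreal (g x * 1) \<partial>lborel) = ennreal 1"
  using nd_m0[OF sp] by simp
private lemma m2': "(\<integral>\<^sup>+x. ennreal (g x * x\<^sup>2) \<partial>lborel) = ennreal (\<nu>/2)"
  using nd_m2[OF sp] s2 by simp
private lemma m4': "(\<integral>\<^sup>+x. ennreal (g x * x^4) \<partial>lborel) = ennreal (3 * \<nu>^2/4)"
  using nd_m4[OF sp] s4 by simp

lemma CN_re2: "has_bochner_integral lborel (\<lambda>z. CN_density \<nu> z * (Re z)\<^sup>2) (\<nu>/2)"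
  using nnI[OF _ _ _ _ m2' m0'] nu by simp
lemma CN_im2: "has_bochner_integral lborel (\<lambda>z. CN_density \<nu> z * (Im z)\<^sup>2) (\<nu>/2)"
  using nnI[OF _ _ _ _ m0' m2'] nu by simp
lemma CN_re4: "has_bochner_integral lborel (\<lambda>z. CN_density \<nu> z * (Re z)^4) (3 * \<nu>^2/4)"
  using nnI[OF _ _ _ _ m4' m0'] nu by simp
lemma CN_im4: "has_bochner_integral lborel (\<lambda>z. CN_density \<nu> z * (Im z)^4) (3 * \<nu>^2/4)"
  using nnI[OF _ _ _ _ m0' m4'] nu by simp
lemma CN_re2im2: "has_bochner_integral lborel (\<lambda>z. CN_density \<nu> z * ((Re z)\<^sup>2 * (Im z)\<^sup>2)) (\<nu>^2/4)"
  using nnI[OF _ _ _ _ m2' m2'] nu by (simp add: power2_eq_square)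

lemma CN_abs2: "has_bochner_integral lborel (\<lambda>z. CN_density \<nu> z * (cmod z)\<^sup>2) \<nu>"
proof -
  have "has_bochner_integral lborel (\<lambda>z. CN_density \<nu> z * (Re z)\<^sup>2 + CN_density \<nu> z * (Im z)\<^sup>2) (\<nu>/2 + \<nu>/2)"
    by (intro has_bochner_integral_add CN_re2 CN_im2)
  then show ?thesis by (simp add: cmod_power2 algebra_simps)
qed

lemma CN_abs4: "has_bochner_integral lborel (\<lambda>z. CN_density \<nu> z * (cmod z)^4) (2 * \<nu>^2)"
proof -
  have "has_bochner_integral lborel (\<lambda>z. CN_density \<nu> z * (Re z)^4 + 2 * (CN_density \<nu> z * ((Re z)\<^sup>2 * (Im z)\<^sup>2)) + CN_density \<nu> z * (Im z)^4)
     (3 * \<nu>^2/4 + 2 * (\<nu>^2/4) + 3 * \<nu>^2/4)"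
    by (intro has_bochner_integral_add has_bochner_integral_mult_right CN_re4 CN_im4 CN_re2im2)
  moreover have "(\<lambda>z. CN_density \<nu> z * (Re z)^4 + 2 * (CN_density \<nu> z * ((Re z)\<^sup>2 * (Im z)\<^sup>2)) + CN_density \<nu> z * (Im z)^4) = (\<lambda>z. CN_density \<nu> z * (cmod z)^4)"
  proof
    fix z
    have c4: "(cmod z)^4 = ((Re z)\<^sup>2 + (Im z)\<^sup>2)\<^sup>2"
      by (simp add: cmod_power2[symmetric])
    show "CN_density \<nu> z * (Re z)^4 + 2 * (CN_density \<nu> z * ((Re z)\<^sup>2 * (Im z)\<^sup>2)) + CN_density \<nu> z * (Im z)^4 = CN_density \<nu> z * (cmod z)^4"
      by (subst c4) algebra
  qed
  moreover have "3 * \<nu>^2/4 + 2 * (\<nu>^2/4) + 3 * \<nu>^2/4 = 2 * \<nu>^2" by simp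
  ultimately show ?thesis by simp
qed

lemma CN_mean: "(\<integral>z. CN_density \<nu> z *\<^sub>R z \<partial>lborel) = 0"
proof -
  have "(\<integral>z. CN_density \<nu> z *\<^sub>R z \<partial>lborel) = (\<integral>z. CN_density \<nu> z *\<^sub>R z \<partial>(distr lborel borel uminus))"
    by (simp add: lborel_uminus_complex)
  also have "\<dots> = (\<integral>z. CN_density \<nu> (-z) *\<^sub>R (-z) \<partial>lborel)"
    by (rule integral_distr) auto
  also have "\<dots> = - (\<integral>z. CN_density \<nu> z *\<^sub>R z \<partial>lborel)"
    by (simp add: CN_density_def)
  finally show ?thesis by simp
qed

lemma CN_sq: "(\<integral>z. CN_density \<nu> z *\<^sub>R z\<^sup>2 \<partial>lborel) = 0"
proof -
  let ?I = "(\<integral>z. CN_density \<nu> z *\<^sub>R z\<^sup>2 \<partial>lborel)"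
  have "?I = (\<integral>z. CN_density \<nu> z *\<^sub>R z\<^sup>2 \<partial>(distr lborel borel cnj))"
    by (simp add: lborel_cnj)
  also have "\<dots> = (\<integral>z. CN_density \<nu> (cnj z) *\<^sub>R (cnj z)\<^sup>2 \<partial>lborel)"
    by (rule integral_distr) auto
  also have "\<dots> = (\<integral>z. cnj (CN_density \<nu> z *\<^sub>R z\<^sup>2) \<partial>lborel)"
    by (simp add: CN_density_def)
  also have "\<dots> = cnj ?I" by (rule Bochner_Integration.integral_cnj)
  finally have im: "Im ?I = 0" by (metis cnj.simps(2) neg_equal_zero)
  have int: "integrable lborel (\<lambda>z. CN_density \<nu> z *\<^sub>R z\<^sup>2)"
  proof (subst integrable_norm_iff[symmetric])
    show "(\<lambda>z. CN_density \<nu> z *\<^sub>R z\<^sup>2) \<in> borel_measurable lborel" by simp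
    have "integrable lborel (\<lambda>z. CN_density \<nu> z * (cmod z)\<^sup>2)"
      using CN_abs2 by (simp add: has_bochner_integral_iff)
    moreover have "\<And>z. norm (CN_density \<nu> z *\<^sub>R z\<^sup>2) = CN_density \<nu> z * (cmod z)\<^sup>2"
      using CN_nonneg[OF nu] by (simp add: norm_power)
    ultimately show "integrable lborel (\<lambda>z. norm (CN_density \<nu> z *\<^sub>R z\<^sup>2))" by simp
  qed
  have "has_bochner_integral lborel (\<lambda>z. CN_density \<nu> z * (Re z)\<^sup>2 - CN_density \<nu> z * (Im z)\<^sup>2) (\<nu>/2 - \<nu>/2)"
    by (intro has_bochner_integral_diff CN_re2 CN_im2)
  then have h0: "(\<integral>z. Re (CN_density \<nu> z *\<^sub>R z\<^sup>2) \<partial>lborel) = 0"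
    by (simp add: power2_eq_square algebra_simps has_bochner_integral_iff)
  have h1: "(\<integral>z. Re (CN_density \<nu> z *\<^sub>R z\<^sup>2) \<partial>lborel) = Re ?I"
    by (rule integral_Re[OF int])
  have re: "Re ?I = 0" using h0 h1 by linarith
  show ?thesis using re im by (simp add: complex_eq_iff)
qed

end


lemma cnj_meas'[measurable]: "cnj \<in> borel_measurable borel"
  by (intro borel_measurable_continuous_onI continuous_intros)

definition mon :: "complex \<Rightarrow> nat \<Rightarrow> nat \<Rightarrow> complex" where
  "mon z i j = z ^ i * cnj z ^ j"

lemma mon_meas[measurable]: "(\<lambda>z. mon z i j) \<in> borel_measurable borel"
  unfolding mon_def by measurable

lemma pow_le_1_4: "0 \<le> (t::real) \<Longrightarrow> n \<le> 4 \<Longrightarrow> t ^ n \<le> 1 + t ^ 4"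
proof (cases "t \<le> 1")
  case True
  assume "0 \<le> t"
  then have "t ^ n \<le> 1" using True by (rule power_le_one)
  moreover have "0 \<le> t ^ 4" using \<open>0 \<le> t\<close> by simp
  ultimately show ?thesis by linarith
next
  case False
  assume "n \<le> 4"
  then have "t ^ n \<le> t ^ 4" using False by (intro power_increasing) auto
  then show ?thesis by linarith
qed

lemma mon_int:
  assumes P: "prob_space M" and mY[measurable]: "Y \<in> borel_measurable M"
    and iY: "integrable M (\<lambda>\<omega>. (cmod (Y \<omega>))^4)" and ij: "i + j \<le> 4"
  shows "integrable M (\<lambda>\<omega>. mon (Y \<omega>) i j)"
proof (rule Bochner_Integration.integrable_bound)
  interpret prob_space M by fact
  show "integrable M (\<lambda>\<omega>. 1 + (cmod (Y \<omega>))^4)" using iY by simp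
  show "(\<lambda>\<omega>. mon (Y \<omega>) i j) \<in> borel_measurable M" by measurable
  show "AE \<omega> in M. norm (mon (Y \<omega>) i j) \<le> norm (1 + (cmod (Y \<omega>))^4)"
  proof (rule AE_I2)
    fix \<omega>
    have "norm (mon (Y \<omega>) i j) = cmod (Y \<omega>) ^ (i + j)"
      by (simp add: mon_def norm_mult norm_power power_add)
    also have "\<dots> \<le> 1 + (cmod (Y \<omega>))^4" using ij by (intro pow_le_1_4) auto
    also have "\<dots> = norm (1 + (cmod (Y \<omega>))^4)" by simp
    finally show "norm (mon (Y \<omega>) i j) \<le> norm (1 + (cmod (Y \<omega>))^4)" .
  qed
qed

lemma indep_hbi:
  fixes Y W :: "'a \<Rightarrow> complex" and f g :: "complex \<Rightarrow> complex"
  assumes P: "prob_space M" and ind: "prob_space.indep_var M borel Y borel W"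
    and f[measurable]: "f \<in> borel_measurable borel" and g[measurable]: "g \<in> borel_measurable borel"
    and hf: "has_bochner_integral M (\<lambda>\<omega>. f (Y \<omega>)) a"
    and hg: "has_bochner_integral M (\<lambda>\<omega>. g (W \<omega>)) b"
  shows "has_bochner_integral M (\<lambda>\<omega>. f (Y \<omega>) * g (W \<omega>)) (a * b)"
proof -
  interpret prob_space M by fact
  have i2: "indep_var borel (f \<circ> Y) borel (g \<circ> W)"
    by (rule indep_var_compose[OF ind f g])
  then have i3: "indep_var borel (\<lambda>\<omega>. f (Y \<omega>)) borel (\<lambda>\<omega>. g (W \<omega>))" by (simp add: comp_def)
  have if1: "integrable M (\<lambda>\<omega>. f (Y \<omega>))" and ig: "integrable M (\<lambda>\<omega>. g (W \<omega>))"
    using hf hg by (auto simp: has_bochner_integral_iff)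
  show ?thesis
    using indep_var_lebesgue_integral[OF i3 if1 ig] indep_var_integrable[OF i3 if1 ig] hf hg
    by (simp add: has_bochner_integral_iff)
qed

lemma step:
  fixes Y W :: "'a \<Rightarrow> complex"
  assumes P: "prob_space M" and ind: "prob_space.indep_var M borel Y borel W"
    and mY[measurable]: "Y \<in> borel_measurable M" and mW[measurable]: "W \<in> borel_measurable M"
    and iY: "integrable M (\<lambda>\<omega>. (cmod (Y \<omega>))^4)" and iW: "integrable M (\<lambda>\<omega>. (cmod (W \<omega>))^4)"
    and EY: "(\<integral>\<omega>. Y \<omega> \<partial>M) = 0" and EW: "(\<integral>\<omega>. W \<omega> \<partial>M) = 0"
    and EW2: "(\<integral>\<omega>. (W \<omega>)^2 \<partial>M) = 0"
    and hY2: "has_bochner_integral M (\<lambda>\<omega>. (cmod (Y \<omega>))^2) a"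
    and hY4: "has_bochner_integral M (\<lambda>\<omega>. (cmod (Y \<omega>))^4) a4"
    and hW2: "has_bochner_integral M (\<lambda>\<omega>. (cmod (W \<omega>))^2) b"
    and hW4: "has_bochner_integral M (\<lambda>\<omega>. (cmod (W \<omega>))^4) b4"
  shows "has_bochner_integral M (\<lambda>\<omega>. (cmod (Y \<omega> + W \<omega>))^2) (a + b)"
    and "has_bochner_integral M (\<lambda>\<omega>. (cmod (Y \<omega> + W \<omega>))^4) (a4 + b4 + 4 * a * b)"
    and "(\<integral>\<omega>. Y \<omega> + W \<omega> \<partial>M) = 0"
proof -
  interpret prob_space M by fact
  have hm: "has_bochner_integral M (\<lambda>\<omega>. mon (X \<omega>) i j) (\<integral>\<omega>. mon (X \<omega>) i j \<partial>M)"
    if "X \<in> borel_measurable M" "integrable M (\<lambda>\<omega>. (cmod (X \<omega>))^4)" "i + j \<le> 4" for X i j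
    using mon_int[OF P that] by (simp add: has_bochner_integral_iff)
  have m10: "(\<integral>\<omega>. mon (X \<omega>) 1 0 \<partial>M) = (\<integral>\<omega>. X \<omega> \<partial>M)" for X
    by (simp add: mon_def)
  have m01: "(\<integral>\<omega>. mon (X \<omega>) 0 1 \<partial>M) = cnj (\<integral>\<omega>. X \<omega> \<partial>M)" for X
    by (simp add: mon_def)
  have m20: "(\<integral>\<omega>. mon (X \<omega>) 2 0 \<partial>M) = (\<integral>\<omega>. (X \<omega>)^2 \<partial>M)" for X
    by (simp add: mon_def)
  have m02: "(\<integral>\<omega>. mon (X \<omega>) 0 2 \<partial>M) = cnj (\<integral>\<omega>. (X \<omega>)^2 \<partial>M)" for X
  proof -
    have e: "(\<lambda>\<omega>. mon (X \<omega>) 0 2) = (\<lambda>\<omega>. cnj ((X \<omega>)^2))" by (simp add: mon_def fun_eq_iff)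
    show ?thesis by (simp only: e Bochner_Integration.integral_cnj)
  qed
  have m11: "mon z 1 1 = of_real ((cmod z)^2)" for z
    unfolding mon_def complex_norm_square by simp
  have m22: "mon z 2 2 = of_real ((cmod z)^4)" for z
  proof -
    have "mon z 2 2 = mon z 1 1 * mon z 1 1" by (simp add: mon_def power2_eq_square algebra_simps)
    also have "\<dots> = of_real ((cmod z)^2 * (cmod z)^2)" unfolding m11 by simp
    also have "(cmod z)^2 * (cmod z)^2 = (cmod z)^4" by (simp add: power2_eq_square power4_eq_xxxx)
    finally show ?thesis .
  qed
  have cY2: "has_bochner_integral M (\<lambda>\<omega>. mon (Y \<omega>) 1 1) (of_real a)"
    using has_bochner_integral_of_real[OF hY2] by (simp only: m11)
  have cY4: "has_bochner_integral M (\<lambda>\<omega>. mon (Y \<omega>) 2 2) (of_real a4)"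
    using has_bochner_integral_of_real[OF hY4] by (simp only: m22)
  have cW2: "has_bochner_integral M (\<lambda>\<omega>. mon (W \<omega>) 1 1) (of_real b)"
    using has_bochner_integral_of_real[OF hW2] by (simp only: m11)
  have cW4: "has_bochner_integral M (\<lambda>\<omega>. mon (W \<omega>) 2 2) (of_real b4)"
    using has_bochner_integral_of_real[OF hW4] by (simp only: m22)
  have Y10: "has_bochner_integral M (\<lambda>\<omega>. mon (Y \<omega>) 1 0) 0"
    using hm[OF mY iY, of 1 0] m10[of Y] EY by simp
  have Y01: "has_bochner_integral M (\<lambda>\<omega>. mon (Y \<omega>) 0 1) 0"
    using hm[OF mY iY, of 0 1] m01[of Y] EY by simp
  have W10: "has_bochner_integral M (\<lambda>\<omega>. mon (W \<omega>) 1 0) 0"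
    using hm[OF mW iW, of 1 0] m10[of W] EW by simp
  have W01: "has_bochner_integral M (\<lambda>\<omega>. mon (W \<omega>) 0 1) 0"
    using hm[OF mW iW, of 0 1] m01[of W] EW by simp
  have W20: "has_bochner_integral M (\<lambda>\<omega>. mon (W \<omega>) 2 0) 0"
    using hm[OF mW iW, of 2 0] m20[of W] EW2 by simp
  have W02: "has_bochner_integral M (\<lambda>\<omega>. mon (W \<omega>) 0 2) 0"
    using hm[OF mW iW, of 0 2] m02[of W] EW2 by simp
  note ih = indep_hbi[OF P ind mon_meas mon_meas]
  have "has_bochner_integral M (\<lambda>\<omega>. mon (Y \<omega>) 1 1 + mon (Y \<omega>) 1 0 * mon (W \<omega>) 0 1
      + mon (Y \<omega>) 0 1 * mon (W \<omega>) 1 0 + mon (W \<omega>) 1 1) (of_real a + 0 * 0 + 0 * 0 + of_real b)"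
    by (intro has_bochner_integral_add ih cY2 cW2 Y10 Y01 W10 W01)
  moreover have "(\<lambda>\<omega>. mon (Y \<omega>) 1 1 + mon (Y \<omega>) 1 0 * mon (W \<omega>) 0 1
      + mon (Y \<omega>) 0 1 * mon (W \<omega>) 1 0 + mon (W \<omega>) 1 1) = (\<lambda>\<omega>. of_real ((cmod (Y \<omega> + W \<omega>))^2))"
    by (rule ext, unfold complex_norm_square mon_def) (simp add: algebra_simps)
  ultimately have "has_bochner_integral M (\<lambda>\<omega>. complex_of_real ((cmod (Y \<omega> + W \<omega>))^2)) (complex_of_real (a + b))"
    by simp
  from has_bochner_integral_Re[OF this]
  show "has_bochner_integral M (\<lambda>\<omega>. (cmod (Y \<omega> + W \<omega>))^2) (a + b)" by simp
  have Y21: "has_bochner_integral M (\<lambda>\<omega>. mon (Y \<omega>) 2 1) (\<integral>\<omega>. mon (Y \<omega>) 2 1 \<partial>M)" by (rule hm[OF mY iY]) simp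
  have Y12: "has_bochner_integral M (\<lambda>\<omega>. mon (Y \<omega>) 1 2) (\<integral>\<omega>. mon (Y \<omega>) 1 2 \<partial>M)" by (rule hm[OF mY iY]) simp
  have Y20: "has_bochner_integral M (\<lambda>\<omega>. mon (Y \<omega>) 2 0) (\<integral>\<omega>. mon (Y \<omega>) 2 0 \<partial>M)" by (rule hm[OF mY iY]) simp
  have Y02: "has_bochner_integral M (\<lambda>\<omega>. mon (Y \<omega>) 0 2) (\<integral>\<omega>. mon (Y \<omega>) 0 2 \<partial>M)" by (rule hm[OF mY iY]) simp
  have W21: "has_bochner_integral M (\<lambda>\<omega>. mon (W \<omega>) 2 1) (\<integral>\<omega>. mon (W \<omega>) 2 1 \<partial>M)" by (rule hm[OF mW iW]) simp
  have W12: "has_bochner_integral M (\<lambda>\<omega>. mon (W \<omega>) 1 2) (\<integral>\<omega>. mon (W \<omega>) 1 2 \<partial>M)" by (rule hm[OF mW iW]) simp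
  have "has_bochner_integral M (\<lambda>\<omega>.
        mon (Y \<omega>) 2 2
      + 2 * (mon (Y \<omega>) 2 1 * mon (W \<omega>) 0 1)
      + mon (Y \<omega>) 2 0 * mon (W \<omega>) 0 2
      + 2 * (mon (Y \<omega>) 1 2 * mon (W \<omega>) 1 0)
      + 4 * (mon (Y \<omega>) 1 1 * mon (W \<omega>) 1 1)
      + 2 * (mon (Y \<omega>) 1 0 * mon (W \<omega>) 1 2)
      + mon (Y \<omega>) 0 2 * mon (W \<omega>) 2 0
      + 2 * (mon (Y \<omega>) 0 1 * mon (W \<omega>) 2 1)
      + mon (W \<omega>) 2 2)
     (of_real a4
      + 2 * ((\<integral>\<omega>. mon (Y \<omega>) 2 1 \<partial>M) * 0)
      + (\<integral>\<omega>. mon (Y \<omega>) 2 0 \<partial>M) * 0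
      + 2 * ((\<integral>\<omega>. mon (Y \<omega>) 1 2 \<partial>M) * 0)
      + 4 * (of_real a * of_real b)
      + 2 * (0 * (\<integral>\<omega>. mon (W \<omega>) 1 2 \<partial>M))
      + (\<integral>\<omega>. mon (Y \<omega>) 0 2 \<partial>M) * 0
      + 2 * (0 * (\<integral>\<omega>. mon (W \<omega>) 2 1 \<partial>M))
      + of_real b4)"
    by (intro has_bochner_integral_add has_bochner_integral_mult_right ih
          cY2 cY4 cW2 cW4 Y10 Y01 W10 W01 W20 W02 Y21 Y12 Y20 Y02 W21 W12)
  moreover have "(\<lambda>\<omega>.
        mon (Y \<omega>) 2 2
      + 2 * (mon (Y \<omega>) 2 1 * mon (W \<omega>) 0 1)
      + mon (Y \<omega>) 2 0 * mon (W \<omega>) 0 2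
      + 2 * (mon (Y \<omega>) 1 2 * mon (W \<omega>) 1 0)
      + 4 * (mon (Y \<omega>) 1 1 * mon (W \<omega>) 1 1)
      + 2 * (mon (Y \<omega>) 1 0 * mon (W \<omega>) 1 2)
      + mon (Y \<omega>) 0 2 * mon (W \<omega>) 2 0
      + 2 * (mon (Y \<omega>) 0 1 * mon (W \<omega>) 2 1)
      + mon (W \<omega>) 2 2) = (\<lambda>\<omega>. of_real ((cmod (Y \<omega> + W \<omega>))^4))"
  proof
    fix \<omega>
    show "mon (Y \<omega>) 2 2
      + 2 * (mon (Y \<omega>) 2 1 * mon (W \<omega>) 0 1)
      + mon (Y \<omega>) 2 0 * mon (W \<omega>) 0 2
      + 2 * (mon (Y \<omega>) 1 2 * mon (W \<omega>) 1 0)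
      + 4 * (mon (Y \<omega>) 1 1 * mon (W \<omega>) 1 1)
      + 2 * (mon (Y \<omega>) 1 0 * mon (W \<omega>) 1 2)
      + mon (Y \<omega>) 0 2 * mon (W \<omega>) 2 0
      + 2 * (mon (Y \<omega>) 0 1 * mon (W \<omega>) 2 1)
      + mon (W \<omega>) 2 2 = of_real ((cmod (Y \<omega> + W \<omega>))^4)"
      unfolding m22[symmetric] unfolding mon_def by (simp add: power2_eq_square) algebra
  qed
  ultimately have "has_bochner_integral M (\<lambda>\<omega>. complex_of_real ((cmod (Y \<omega> + W \<omega>))^4)) (complex_of_real (a4 + b4 + 4 * a * b))"
    by (simp add: algebra_simps)
  from has_bochner_integral_Re[OF this]
  show "has_bochner_integral M (\<lambda>\<omega>. (cmod (Y \<omega> + W \<omega>))^4) (a4 + b4 + 4 * a * b)" by simp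
  have "integrable M Y" "integrable M W"
    using hm[OF mY iY, of 1 0] hm[OF mW iW, of 1 0] by (auto simp: mon_def has_bochner_integral_iff)
  then show "(\<integral>\<omega>. Y \<omega> + W \<omega> \<partial>M) = 0" using EY EW by simp
qed



lemma cis_meas[measurable]: "cis \<in> borel_measurable borel"
  by (intro borel_measurable_continuous_onI continuous_intros)

lemma gauss_mom:
  assumes P: "prob_space M" and nu: "\<nu> > 0" and cg: "circ_gauss M \<nu> X"
  shows "X \<in> borel_measurable M"
    and "integrable M (\<lambda>\<omega>. (cmod (X \<omega>))^4)"
    and "(\<integral>\<omega>. X \<omega> \<partial>M) = 0"
    and "(\<integral>\<omega>. (X \<omega>)^2 \<partial>M) = 0"
    and "has_bochner_integral M (\<lambda>\<omega>. (cmod (X \<omega>))^2) \<nu>"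
    and "has_bochner_integral M (\<lambda>\<omega>. (cmod (X \<omega>))^4) (2 * \<nu>^2)"
proof -
  show "X \<in> borel_measurable M"
    using cg unfolding circ_gauss_def distributed_def by auto
  have t1: "integrable M (\<lambda>\<omega>. F (X \<omega>)) \<longleftrightarrow> integrable lborel (\<lambda>z. CN_density \<nu> z *\<^sub>R F z)"
    and t2: "(\<integral>\<omega>. F (X \<omega>) \<partial>M) = (\<integral>z. CN_density \<nu> z *\<^sub>R F z \<partial>lborel)"
    if "F \<in> borel_measurable borel" for F :: "complex \<Rightarrow> 'b::{banach, second_countable_topology}"
    using cn_transfer[OF cg nu that] by auto
  show "(\<integral>\<omega>. X \<omega> \<partial>M) = 0"
    using t2[of "\<lambda>z. z"] CN_mean[OF nu] by simp
  show "(\<integral>\<omega>. (X \<omega>)^2 \<partial>M) = 0"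
    using t2[of "\<lambda>z. z^2"] CN_sq[OF nu] by simp
  have a2: "has_bochner_integral lborel (\<lambda>z. CN_density \<nu> z *\<^sub>R (cmod z)^2) \<nu>"
    using CN_abs2[OF nu] by simp
  have a4: "has_bochner_integral lborel (\<lambda>z. CN_density \<nu> z *\<^sub>R (cmod z)^4) (2 * \<nu>^2)"
    using CN_abs4[OF nu] by simp
  show "integrable M (\<lambda>\<omega>. (cmod (X \<omega>))^4)"
    using t1[of "\<lambda>z. (cmod z)^4"] a4 by (simp add: has_bochner_integral_iff)
  show "has_bochner_integral M (\<lambda>\<omega>. (cmod (X \<omega>))^2) \<nu>"
    using t1[of "\<lambda>z. (cmod z)^2"] t2[of "\<lambda>z. (cmod z)^2"] a2 by (simp add: has_bochner_integral_iff)
  show "has_bochner_integral M (\<lambda>\<omega>. (cmod (X \<omega>))^4) (2 * \<nu>^2)"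
    using t1[of "\<lambda>z. (cmod z)^4"] t2[of "\<lambda>z. (cmod z)^4"] a4 by (simp add: has_bochner_integral_iff)
qed

lemma bounded_hbi:
  fixes f :: "'a \<Rightarrow> complex"
  assumes P: "prob_space M" and [measurable]: "f \<in> borel_measurable M" and b: "\<And>\<omega>. norm (f \<omega>) \<le> B"
  shows "has_bochner_integral M f (\<integral>\<omega>. f \<omega> \<partial>M)"
proof -
  interpret prob_space M by fact
  have "integrable M f" by (rule integrable_const_bound[where B=B]) (auto simp: b)
  then show ?thesis by (simp add: has_bochner_integral_iff)
qed

lemma term_mom:
  fixes d :: real
  assumes P: "prob_space M" and nu: "\<nu> > 0" and cg: "circ_gauss M \<nu> h"
    and mphi[measurable]: "\<phi> \<in> borel_measurable M"
    and ind: "prob_space.indep_var M borel h borel (\<lambda>\<omega>. complex_of_real (\<phi> \<omega>))"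
  defines "W \<equiv> (\<lambda>\<omega>. h \<omega> * (complex_of_real d * cis (\<phi> \<omega>)))"
  shows "W \<in> borel_measurable M"
    and "integrable M (\<lambda>\<omega>. (cmod (W \<omega>))^4)"
    and "(\<integral>\<omega>. W \<omega> \<partial>M) = 0"
    and "(\<integral>\<omega>. (W \<omega>)^2 \<partial>M) = 0"
    and "has_bochner_integral M (\<lambda>\<omega>. (cmod (W \<omega>))^2) (d^2 * \<nu>)"
    and "has_bochner_integral M (\<lambda>\<omega>. (cmod (W \<omega>))^4) (2 * (d^2 * \<nu>)^2)"
proof -
  note g = gauss_mom[OF P nu cg]
  have mh[measurable]: "h \<in> borel_measurable M" by (rule g(1))
  show "W \<in> borel_measurable M" unfolding W_def by measurable
  have n: "cmod (W \<omega>) = cmod (h \<omega>) * \<bar>d\<bar>" for \<omega>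
    by (simp add: W_def norm_mult)
  have n2: "(cmod (W \<omega>))^2 = d^2 * (cmod (h \<omega>))^2" for \<omega>
    by (simp add: n power_mult_distrib)
  have n4: "(cmod (W \<omega>))^4 = d^4 * (cmod (h \<omega>))^4" for \<omega>
  proof -
    have "\<bar>d\<bar>^4 = d^4" by (simp add: power_even_abs)
    then show ?thesis by (simp add: n power_mult_distrib)
  qed
  show "has_bochner_integral M (\<lambda>\<omega>. (cmod (W \<omega>))^2) (d^2 * \<nu>)"
    unfolding n2 by (intro has_bochner_integral_mult_right g(5))
  have "has_bochner_integral M (\<lambda>\<omega>. (cmod (W \<omega>))^4) (d^4 * (2 * \<nu>^2))"
    unfolding n4 by (intro has_bochner_integral_mult_right g(6))
  moreover have "d^4 * (2 * \<nu>^2) = 2 * (d^2 * \<nu>)^2" by (simp add: power_mult_distrib power_mult[symmetric])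
  ultimately show h4: "has_bochner_integral M (\<lambda>\<omega>. (cmod (W \<omega>))^4) (2 * (d^2 * \<nu>)^2)" by simp
  then show "integrable M (\<lambda>\<omega>. (cmod (W \<omega>))^4)" by (simp add: has_bochner_integral_iff)
  have ih: "integrable M h" using mon_int[OF P mh g(2), of 1 0] by (simp add: mon_def)
  have ih2: "integrable M (\<lambda>\<omega>. (h \<omega>)^2)" using mon_int[OF P mh g(2), of 2 0] by (simp add: mon_def)
  have b1: "has_bochner_integral M (\<lambda>\<omega>. (\<lambda>z. complex_of_real d * cis (Re z)) (complex_of_real (\<phi> \<omega>)))
      (\<integral>\<omega>. (\<lambda>z. complex_of_real d * cis (Re z)) (complex_of_real (\<phi> \<omega>)) \<partial>M)"
    by (rule bounded_hbi[OF P, where B="\<bar>d\<bar>"]) (auto simp: norm_mult)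
  have b2: "has_bochner_integral M (\<lambda>\<omega>. (\<lambda>z. (complex_of_real d * cis (Re z))^2) (complex_of_real (\<phi> \<omega>)))
      (\<integral>\<omega>. (\<lambda>z. (complex_of_real d * cis (Re z))^2) (complex_of_real (\<phi> \<omega>)) \<partial>M)"
    by (rule bounded_hbi[OF P, where B="d^2"]) (auto simp: norm_mult norm_power)
  have h1: "has_bochner_integral M (\<lambda>\<omega>. (\<lambda>z. z) (h \<omega>)) 0"
    using ih g(3) by (simp add: has_bochner_integral_iff)
  have h2: "has_bochner_integral M (\<lambda>\<omega>. (\<lambda>z. z^2) (h \<omega>)) 0"
    using ih2 g(4) by (simp add: has_bochner_integral_iff)
  have "has_bochner_integral M (\<lambda>\<omega>. (\<lambda>z. z) (h \<omega>) * (\<lambda>z. complex_of_real d * cis (Re z)) (complex_of_real (\<phi> \<omega>))) (0 * (\<integral>\<omega>. (\<lambda>z. complex_of_real d * cis (Re z)) (complex_of_real (\<phi> \<omega>)) \<partial>M))"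
    by (rule indep_hbi[OF P ind _ _ h1 b1]) auto
  then show "(\<integral>\<omega>. W \<omega> \<partial>M) = 0" by (simp add: W_def has_bochner_integral_iff)
  have "has_bochner_integral M (\<lambda>\<omega>. (\<lambda>z. z^2) (h \<omega>) * (\<lambda>z. (complex_of_real d * cis (Re z))^2) (complex_of_real (\<phi> \<omega>))) (0 * (\<integral>\<omega>. (\<lambda>z. (complex_of_real d * cis (Re z))^2) (complex_of_real (\<phi> \<omega>)) \<partial>M))"
    by (rule indep_hbi[OF P ind _ _ h2 b2]) auto
  then show "(\<integral>\<omega>. (W \<omega>)^2 \<partial>M) = 0" by (simp add: W_def has_bochner_integral_iff power_mult_distrib)
qed

lemma indep_restrict_fun:
  fixes X :: "'i \<Rightarrow> 'a \<Rightarrow> complex"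
  assumes P: "prob_space M" and ind: "prob_space.indep_vars M (\<lambda>_. borel) X J"
    and AB: "A \<inter> B = {}" "A \<subseteq> J" "B \<subseteq> J"
    and F: "F \<in> borel_measurable (PiM A (\<lambda>_. borel))" and G: "G \<in> borel_measurable (PiM B (\<lambda>_. borel))"
  shows "prob_space.indep_var M borel (\<lambda>\<omega>. F (restrict (\<lambda>i. X i \<omega>) A)) borel (\<lambda>\<omega>. G (restrict (\<lambda>i. X i \<omega>) B))"
proof -
  interpret prob_space M by fact
  have "indep_var (PiM A (\<lambda>_. borel)) (\<lambda>\<omega>. restrict (\<lambda>i. X i \<omega>) A) (PiM B (\<lambda>_. borel)) (\<lambda>\<omega>. restrict (\<lambda>i. X i \<omega>) B)"
    by (rule indep_var_restrict[OF ind AB])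
  from indep_var_compose[OF this F G] show ?thesis by (simp add: comp_def)
qed



definition bsum :: "nat \<Rightarrow> (nat \<Rightarrow> 'a \<Rightarrow> complex) \<Rightarrow> (nat \<Rightarrow> real) \<Rightarrow> (nat \<Rightarrow> 'a \<Rightarrow> real) \<Rightarrow> ('a \<Rightarrow> complex) \<Rightarrow> 'a \<Rightarrow> complex" where
  "bsum n h d \<phi> z \<omega> = (\<Sum>k=1..n. h k \<omega> * (complex_of_real (d k) * cis (\<phi> k \<omega>))) + z \<omega>"

definition bF :: "nat \<Rightarrow> (nat \<Rightarrow> 'i) \<Rightarrow> (nat \<Rightarrow> 'i) \<Rightarrow> 'i \<Rightarrow> (nat \<Rightarrow> real) \<Rightarrow> ('i \<Rightarrow> complex) \<Rightarrow> complex" where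
  "bF n H P Z d x = (\<Sum>k=1..n. x (H k) * (complex_of_real (d k) * cis (Re (x (P k))))) + x Z"

definition good :: "'a measure \<Rightarrow> ('a \<Rightarrow> complex) \<Rightarrow> real \<Rightarrow> bool" where
  "good M Y a \<longleftrightarrow> Y \<in> borel_measurable M \<and> integrable M (\<lambda>\<omega>. (cmod (Y \<omega>))^4) \<and> (\<integral>\<omega>. Y \<omega> \<partial>M) = 0
     \<and> has_bochner_integral M (\<lambda>\<omega>. (cmod (Y \<omega>))^2) a \<and> has_bochner_integral M (\<lambda>\<omega>. (cmod (Y \<omega>))^4) (2 * a^2)"

lemma bF_meas:
  assumes "H ` {1..n} \<subseteq> A" "P ` {1..n} \<subseteq> A" "Z \<in> A"
  shows "bF n H P Z d \<in> borel_measurable (PiM A (\<lambda>_. borel))"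
proof -
  have s: "(\<lambda>x. \<Sum>k=1..n. x (H k) * (complex_of_real (d k) * cis (Re (x (P k))))) \<in> borel_measurable (PiM A (\<lambda>_. borel))"
  proof (rule borel_measurable_sum)
    fix k assume k: "k \<in> {1..n}"
    have [measurable]: "(\<lambda>x. x (H k)) \<in> borel_measurable (PiM A (\<lambda>_. borel))"
      using k assms by (intro measurable_component_singleton) auto
    have [measurable]: "(\<lambda>x. x (P k)) \<in> borel_measurable (PiM A (\<lambda>_. borel))"
      using k assms by (intro measurable_component_singleton) auto
    show "(\<lambda>x. x (H k) * (complex_of_real (d k) * cis (Re (x (P k))))) \<in> borel_measurable (PiM A (\<lambda>_. borel))"
      by measurable
  qed
  have [measurable]: "(\<lambda>x. x Z) \<in> borel_measurable (PiM A (\<lambda>_. borel))"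
    using assms by (intro measurable_component_singleton) auto
  show ?thesis unfolding bF_def[abs_def] using s by measurable
qed

lemma bF_restrict:
  fixes X :: "'i \<Rightarrow> 'a \<Rightarrow> complex"
  assumes "H ` {1..n} \<subseteq> A" "P ` {1..n} \<subseteq> A" "Z \<in> A"
    and XH: "\<And>k. k \<in> {1..n} \<Longrightarrow> X (H k) = h k"
    and XP: "\<And>k. k \<in> {1..n} \<Longrightarrow> X (P k) = (\<lambda>\<omega>. complex_of_real (\<phi> k \<omega>))"
    and XZ: "X Z = z"
  shows "(\<lambda>\<omega>. bF n H P Z d (restrict (\<lambda>i. X i \<omega>) A)) = bsum n h d \<phi> z"
proof
  fix \<omega>
  have "(\<Sum>k=1..n. restrict (\<lambda>i. X i \<omega>) A (H k) * (complex_of_real (d k) * cis (Re (restrict (\<lambda>i. X i \<omega>) A (P k)))))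
      = (\<Sum>k=1..n. h k \<omega> * (complex_of_real (d k) * cis (\<phi> k \<omega>)))"
  proof (rule sum.cong)
    fix k assume k: "k \<in> {1..n}"
    then have "H k \<in> A" "P k \<in> A" using assms by auto
    then show "restrict (\<lambda>i. X i \<omega>) A (H k) * (complex_of_real (d k) * cis (Re (restrict (\<lambda>i. X i \<omega>) A (P k))))
      = h k \<omega> * (complex_of_real (d k) * cis (\<phi> k \<omega>))"
      using XH[OF k] XP[OF k] by simp
  qed simp
  then show "bF n H P Z d (restrict (\<lambda>i. X i \<omega>) A) = bsum n h d \<phi> z \<omega>"
    using assms(3) XZ by (simp add: bF_def bsum_def)
qed

lemma branch:
  fixes X :: "'i \<Rightarrow> 'a \<Rightarrow> complex" and H P :: "nat \<Rightarrow> 'i" and Z :: 'i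
    and h :: "nat \<Rightarrow> 'a \<Rightarrow> complex" and \<phi> :: "nat \<Rightarrow> 'a \<Rightarrow> real" and z :: "'a \<Rightarrow> complex"
    and d \<mu> :: "nat \<Rightarrow> real" and \<sigma> :: real
  assumes Pr: "prob_space M" and ind: "prob_space.indep_vars M (\<lambda>_. borel) X J"
    and injH: "inj H" and injP: "inj P" and HP: "\<And>k l. H k \<noteq> P l" and HZ: "\<And>k. H k \<noteq> Z" and PZ: "\<And>k. P k \<noteq> Z"
    and HJ: "H ` {1..K} \<subseteq> J" and PJ: "P ` {1..K} \<subseteq> J" and ZJ: "Z \<in> J"
    and XH: "\<And>k. k \<in> {1..K} \<Longrightarrow> X (H k) = h k"
    and XP: "\<And>k. k \<in> {1..K} \<Longrightarrow> X (P k) = (\<lambda>\<omega>. complex_of_real (\<phi> k \<omega>))"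
    and XZ: "X Z = z"
    and mu: "\<And>k. k \<in> {1..K} \<Longrightarrow> \<mu> k > 0"
    and cgh: "\<And>k. k \<in> {1..K} \<Longrightarrow> circ_gauss M ((\<mu> k)^2) (h k)"
    and sig: "\<sigma> > 0" and cgz: "circ_gauss M \<sigma> z"
    and mphi: "\<And>k. k \<in> {1..K} \<Longrightarrow> \<phi> k \<in> borel_measurable M"
  shows "n \<le> K \<Longrightarrow> good M (bsum n h d \<phi> z) (\<sigma> + (\<Sum>k=1..n. (d k)^2 * (\<mu> k)^2))"
proof (induction n)
  case 0
  have e: "bsum 0 h d \<phi> z = z" by (simp add: bsum_def fun_eq_iff)
  show ?case unfolding e good_def using gauss_mom[OF Pr sig cgz] by simp
next
  case (Suc n)
  then have nK: "n \<le> K" and k1: "Suc n \<in> {1..K}" by auto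
  have IH: "good M (bsum n h d \<phi> z) (\<sigma> + (\<Sum>k=1..n. (d k)^2 * (\<mu> k)^2))" using Suc nK by simp
  define W where "W = (\<lambda>\<omega>. h (Suc n) \<omega> * (complex_of_real (d (Suc n)) * cis (\<phi> (Suc n) \<omega>)))"
  have e: "bsum (Suc n) h d \<phi> z = (\<lambda>\<omega>. bsum n h d \<phi> z \<omega> + W \<omega>)"
    by (simp add: bsum_def W_def fun_eq_iff)
  define A where "A = H ` {1..n} \<union> P ` {1..n} \<union> {Z}"
  define B where "B = {H (Suc n), P (Suc n)}"
  have AB: "A \<inter> B = {}"
    unfolding A_def B_def
    by (auto simp: inj_eq[OF injH] inj_eq[OF injP] HP HP[THEN not_sym] HZ PZ HZ[THEN not_sym] PZ[THEN not_sym])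
  have AJ: "A \<subseteq> J" using HJ PJ ZJ nK unfolding A_def by auto
  have BJ: "B \<subseteq> J" using HJ PJ k1 unfolding B_def by auto
  have sub: "H ` {1..n} \<subseteq> A" "P ` {1..n} \<subseteq> A" "Z \<in> A" unfolding A_def by auto
  have G: "(\<lambda>x. x (H (Suc n)) * (complex_of_real (d (Suc n)) * cis (Re (x (P (Suc n)))))) \<in> borel_measurable (PiM B (\<lambda>_. borel))"
  proof -
    have [measurable]: "(\<lambda>x. x (H (Suc n))) \<in> borel_measurable (PiM B (\<lambda>_. borel))"
      by (intro measurable_component_singleton) (auto simp: B_def)
    have [measurable]: "(\<lambda>x. x (P (Suc n))) \<in> borel_measurable (PiM B (\<lambda>_. borel))"
      by (intro measurable_component_singleton) (auto simp: B_def)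
    show ?thesis by measurable
  qed
  have GW: "(\<lambda>\<omega>. (\<lambda>x. x (H (Suc n)) * (complex_of_real (d (Suc n)) * cis (Re (x (P (Suc n)))))) (restrict (\<lambda>i. X i \<omega>) B)) = W"
    using XH[OF k1] XP[OF k1] by (simp add: B_def W_def fun_eq_iff)
  have FY: "(\<lambda>\<omega>. bF n H P Z d (restrict (\<lambda>i. X i \<omega>) A)) = bsum n h d \<phi> z"
    by (rule bF_restrict[OF sub]) (use XH XP XZ nK in auto)
  have indYW: "prob_space.indep_var M borel (bsum n h d \<phi> z) borel W"
    using indep_restrict_fun[OF Pr ind AB AJ BJ bF_meas[OF sub, of d] G] unfolding FY GW .
  have HPd: "{H (Suc n)} \<inter> {P (Suc n)} = {}" using HP by auto
  have c1: "(\<lambda>x. x (H (Suc n))) \<in> borel_measurable (PiM {H (Suc n)} (\<lambda>_. borel))"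
    by (intro measurable_component_singleton) auto
  have c2: "(\<lambda>x. x (P (Suc n))) \<in> borel_measurable (PiM {P (Suc n)} (\<lambda>_. borel))"
    by (intro measurable_component_singleton) auto
  have indHP: "prob_space.indep_var M borel (h (Suc n)) borel (\<lambda>\<omega>. complex_of_real (\<phi> (Suc n) \<omega>))"
  proof -
    have "H (Suc n) \<in> J" "P (Suc n) \<in> J" using HJ PJ k1 by auto
    then have "{H (Suc n)} \<subseteq> J" "{P (Suc n)} \<subseteq> J" by auto
    from indep_restrict_fun[OF Pr ind HPd this c1 c2] show ?thesis using XH[OF k1] XP[OF k1] by simp
  qed
  note tm = term_mom[OF Pr _ cgh[OF k1] mphi[OF k1] indHP, of "d (Suc n)"]
  have mu2: "(\<mu> (Suc n))^2 > 0" using mu[OF k1] by simp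
  have tm': "W \<in> borel_measurable M" "integrable M (\<lambda>\<omega>. (cmod (W \<omega>))^4)" "(\<integral>\<omega>. W \<omega> \<partial>M) = 0"
    "(\<integral>\<omega>. (W \<omega>)^2 \<partial>M) = 0"
    "has_bochner_integral M (\<lambda>\<omega>. (cmod (W \<omega>))^2) ((d (Suc n))^2 * (\<mu> (Suc n))^2)"
    "has_bochner_integral M (\<lambda>\<omega>. (cmod (W \<omega>))^4) (2 * ((d (Suc n))^2 * (\<mu> (Suc n))^2)^2)"
    using tm[OF mu2] unfolding W_def by auto
  note IH' = IH[unfolded good_def]
  note st = step[OF Pr indYW IH'[THEN conjunct1] tm'(1) IH'[THEN conjunct2, THEN conjunct1] tm'(2)
      IH'[THEN conjunct2, THEN conjunct2, THEN conjunct1] tm'(3) tm'(4)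
      IH'[THEN conjunct2, THEN conjunct2, THEN conjunct2, THEN conjunct1] 
      IH'[THEN conjunct2, THEN conjunct2, THEN conjunct2, THEN conjunct2] tm'(5) tm'(6)]
  have sumS: "\<sigma> + (\<Sum>k=1..Suc n. (d k)^2 * (\<mu> k)^2) = (\<sigma> + (\<Sum>k=1..n. (d k)^2 * (\<mu> k)^2)) + (d (Suc n))^2 * (\<mu> (Suc n))^2"
    by simp
  have m: "(\<lambda>\<omega>. bsum n h d \<phi> z \<omega> + W \<omega>) \<in> borel_measurable M"
    using IH'[THEN conjunct1] tm'(1) by measurable
  show ?case unfolding e good_def sumS
  proof (intro conjI m)
    show "has_bochner_integral M (\<lambda>\<omega>. (cmod (bsum n h d \<phi> z \<omega> + W \<omega>))^2) (\<sigma> + (\<Sum>k=1..n. (d k)^2 * (\<mu> k)^2) + (d (Suc n))^2 * (\<mu> (Suc n))^2)"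
      by (rule st(1))
    have "2 * (\<sigma> + (\<Sum>k=1..n. (d k)^2 * (\<mu> k)^2))^2 + 2 * ((d (Suc n))^2 * (\<mu> (Suc n))^2)^2 + 4 * (\<sigma> + (\<Sum>k=1..n. (d k)^2 * (\<mu> k)^2)) * ((d (Suc n))^2 * (\<mu> (Suc n))^2)
      = 2 * (\<sigma> + (\<Sum>k=1..n. (d k)^2 * (\<mu> k)^2) + (d (Suc n))^2 * (\<mu> (Suc n))^2)^2"
      by (simp add: power2_eq_square algebra_simps)
    then show h4: "has_bochner_integral M (\<lambda>\<omega>. (cmod (bsum n h d \<phi> z \<omega> + W \<omega>))^4) (2 * (\<sigma> + (\<Sum>k=1..n. (d k)^2 * (\<mu> k)^2) + (d (Suc n))^2 * (\<mu> (Suc n))^2)^2)"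
      using st(2) by simp
    then show "integrable M (\<lambda>\<omega>. (cmod (bsum n h d \<phi> z \<omega> + W \<omega>))^4)" by (simp add: has_bochner_integral_iff)
    show "(\<integral>\<omega>. bsum n h d \<phi> z \<omega> + W \<omega> \<partial>M) = 0" by (rule st(3))
  qed
qed



theorem proposition1:
  fixes M :: "'a measure" and K :: nat and u \<mu> :: "nat \<Rightarrow> real" and \<eta> \<sigma>z2 :: real
    and hp hm :: "nat \<Rightarrow> 'a \<Rightarrow> complex" and zp zm :: "'a \<Rightarrow> complex"
    and php phm :: "nat \<Rightarrow> 'a \<Rightarrow> real"
  assumes "prob_space M"
    and "K \<ge> 1"
    and "\<eta> > 0" and "\<sigma>z2 > 0"
    and "\<And>k. k \<in> {1..K} \<Longrightarrow> \<mu> k > 0"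
    and "\<And>k. k \<in> {1..K} \<Longrightarrow> circ_gauss M ((\<mu> k)\<^sup>2) (hp k)"
    and "\<And>k. k \<in> {1..K} \<Longrightarrow> circ_gauss M ((\<mu> k)\<^sup>2) (hm k)"
    and "circ_gauss M \<sigma>z2 zp" and "circ_gauss M \<sigma>z2 zm"
    and "\<And>k. k \<in> {1..K} \<Longrightarrow> unif_phase M (php k)"
    and "\<And>k. k \<in> {1..K} \<Longrightarrow> unif_phase M (phm k)"
    and "prob_space.indep_vars M (\<lambda>_. borel) (rv_family hp hm zp zm php phm) (rv_index_set K)"
  shows
    "let ap = (\<lambda>k \<omega>. complex_of_real (sqrt (\<eta> * max (u k) 0) / \<mu> k) * cis (php k \<omega>));
         am = (\<lambda>k \<omega>. complex_of_real (sqrt (\<eta> * max (- u k) 0) / \<mu> k) * cis (phm k \<omega>));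
         yp = (\<lambda>\<omega>. (\<Sum>k=1..K. hp k \<omega> * ap k \<omega>) + zp \<omega>);
         ym = (\<lambda>\<omega>. (\<Sum>k=1..K. hm k \<omega> * am k \<omega>) + zm \<omega>);
         shat = (\<lambda>\<omega>. ((cmod (yp \<omega>))\<^sup>2 - (cmod (ym \<omega>))\<^sup>2) / \<eta>);
         Sp = (\<Sum>k=1..K. max (u k) 0);
         Sm = (\<Sum>k=1..K. max (- u k) 0);
         s = (\<Sum>k=1..K. u k)
     in integrable M shat \<and> integrable M (\<lambda>\<omega>. (shat \<omega>)\<^sup>2) \<and>
        prob_space.expectation M shat = s \<and>
        prob_space.variance M shat =
          Sp\<^sup>2 + Sm\<^sup>2 + 2 * \<sigma>z2 / \<eta> * (\<Sum>k=1..K. \<bar>u k\<bar>) + 2 * \<sigma>z2\<^sup>2 / \<eta>\<^sup>2"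
proof -
  note Pr = assms(1)
  interpret prob_space M by (rule Pr)
  note ind = assms(12)
  define dp where "dp = (\<lambda>k. sqrt (\<eta> * max (u k) 0) / \<mu> k)"
  define dm where "dm = (\<lambda>k. sqrt (\<eta> * max (- u k) 0) / \<mu> k)"
  define Sp where "Sp = (\<Sum>k=1..K. max (u k) 0)"
  define Sm where "Sm = (\<Sum>k=1..K. max (- u k) 0)"
  define A where "A = \<sigma>z2 + \<eta> * Sp"
  define B where "B = \<sigma>z2 + \<eta> * Sm"
  have mphp: "php k \<in> borel_measurable M" if "k \<in> {1..K}" for k
    using assms(10)[OF that] unfolding unif_phase_def distributed_def by auto
  have mphm: "phm k \<in> borel_measurable M" if "k \<in> {1..K}" for k
    using assms(11)[OF that] unfolding unif_phase_def distributed_def by auto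
  have sp: "(\<Sum>k=1..K. (dp k)^2 * (\<mu> k)^2) = \<eta> * Sp"
    unfolding Sp_def sum_distrib_left
  proof (rule sum.cong)
    fix k assume k: "k \<in> {1..K}"
    have "(sqrt (\<eta> * max (u k) 0))^2 = \<eta> * max (u k) 0" using assms(3) by simp
    then show "(dp k)^2 * (\<mu> k)^2 = \<eta> * max (u k) 0"
      using assms(5)[OF k] by (simp add: dp_def power_divide)
  qed simp
  have sm: "(\<Sum>k=1..K. (dm k)^2 * (\<mu> k)^2) = \<eta> * Sm"
    unfolding Sm_def sum_distrib_left
  proof (rule sum.cong)
    fix k assume k: "k \<in> {1..K}"
    have "(sqrt (\<eta> * max (- u k) 0))^2 = \<eta> * max (- u k) 0" using assms(3) by simp
    then show "(dm k)^2 * (\<mu> k)^2 = \<eta> * max (- u k) 0"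
      using assms(5)[OF k] by (simp add: dm_def power_divide)
  qed simp
  have gp: "good M (bsum K hp dp php zp) A"
    using branch[OF Pr ind, where H=HP and P=PP and Z=ZP and h=hp and \<phi>=php and z=zp and \<mu>=\<mu> and \<sigma>=\<sigma>z2 and K=K and n=K and d=dp]
      assms(5,6,8) assms(4) mphp sp
    by (auto simp: inj_def rv_index_set_def A_def)
  have gm: "good M (bsum K hm dm phm zm) B"
    using branch[OF Pr ind, where H=HM and P=PM and Z=ZM and h=hm and \<phi>=phm and z=zm and \<mu>=\<mu> and \<sigma>=\<sigma>z2 and K=K and n=K and d=dm]
      assms(5,7,9) assms(4) mphm sm
    by (auto simp: inj_def rv_index_set_def B_def)
  define Ap where "Ap = HP ` {1..K} \<union> PP ` {1..K} \<union> {ZP}"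
  define Am where "Am = HM ` {1..K} \<union> PM ` {1..K} \<union> {ZM}"
  have subp: "HP ` {1..K} \<subseteq> Ap" "PP ` {1..K} \<subseteq> Ap" "ZP \<in> Ap" unfolding Ap_def by auto
  have subm: "HM ` {1..K} \<subseteq> Am" "PM ` {1..K} \<subseteq> Am" "ZM \<in> Am" unfolding Am_def by auto
  have indpm: "indep_var borel (bsum K hp dp php zp) borel (bsum K hm dm phm zm)"
  proof -
    have "Ap \<inter> Am = {}" "Ap \<subseteq> rv_index_set K" "Am \<subseteq> rv_index_set K"
      unfolding Ap_def Am_def rv_index_set_def by auto
    from indep_restrict_fun[OF Pr ind this bF_meas[OF subp, of dp] bF_meas[OF subm, of dm]]
    show ?thesis
      by (subst (asm) bF_restrict[OF subp], simp, simp, simp)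
         (subst (asm) bF_restrict[OF subm], simp, simp, simp)
  qed
  define Yp where "Yp = bsum K hp dp php zp"
  define Ym where "Ym = bsum K hm dm phm zm"
  have eyp: "(\<Sum>k=1..K. hp k \<omega> * (complex_of_real (sqrt (\<eta> * max (u k) 0) / \<mu> k) * cis (php k \<omega>))) + zp \<omega> = Yp \<omega>" for \<omega>
    by (simp add: Yp_def bsum_def dp_def)
  have eym: "(\<Sum>k=1..K. hm k \<omega> * (complex_of_real (sqrt (\<eta> * max (- u k) 0) / \<mu> k) * cis (phm k \<omega>))) + zm \<omega> = Ym \<omega>" for \<omega>
    by (simp add: Ym_def bsum_def dm_def)
  note gp' = gp[folded Yp_def, unfolded good_def]
  note gm' = gm[folded Ym_def, unfolded good_def]
  have mYp[measurable]: "Yp \<in> borel_measurable M" using gp' by simp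
  have mYm[measurable]: "Ym \<in> borel_measurable M" using gm' by simp
  have h2p: "has_bochner_integral M (\<lambda>\<omega>. (cmod (Yp \<omega>))^2) A" using gp' by simp
  have h4p: "has_bochner_integral M (\<lambda>\<omega>. (cmod (Yp \<omega>))^4) (2 * A^2)" using gp' by simp
  have h2m: "has_bochner_integral M (\<lambda>\<omega>. (cmod (Ym \<omega>))^2) B" using gm' by simp
  have h4m: "has_bochner_integral M (\<lambda>\<omega>. (cmod (Ym \<omega>))^4) (2 * B^2)" using gm' by simp
  have indpm': "indep_var borel Yp borel Ym" using indpm unfolding Yp_def Ym_def .
  have c2p: "has_bochner_integral M (\<lambda>\<omega>. (\<lambda>z. complex_of_real ((cmod z)^2)) (Yp \<omega>)) (complex_of_real A)"
    by (rule has_bochner_integral_of_real[OF h2p])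
  have c2m: "has_bochner_integral M (\<lambda>\<omega>. (\<lambda>z. complex_of_real ((cmod z)^2)) (Ym \<omega>)) (complex_of_real B)"
    by (rule has_bochner_integral_of_real[OF h2m])
  have cm: "(\<lambda>z. complex_of_real ((cmod z)^2)) \<in> borel_measurable borel" by measurable
  have prod: "has_bochner_integral M (\<lambda>\<omega>. (\<lambda>z. complex_of_real ((cmod z)^2)) (Yp \<omega>) * (\<lambda>z. complex_of_real ((cmod z)^2)) (Ym \<omega>))
      (complex_of_real A * complex_of_real B)"
    by (rule indep_hbi[OF Pr indpm' cm cm c2p c2m])
  have rr: "\<And>x y. Re (complex_of_real x * complex_of_real y) = x * y" by simp
  from has_bochner_integral_Re[OF prod]
  have hpm: "has_bochner_integral M (\<lambda>\<omega>. (cmod (Yp \<omega>))^2 * (cmod (Ym \<omega>))^2) (A * B)"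
    by (simp only: rr)
  have hs: "has_bochner_integral M (\<lambda>\<omega>. ((cmod (Yp \<omega>))^2 - (cmod (Ym \<omega>))^2) / \<eta>) ((A - B) / \<eta>)"
    by (intro has_bochner_integral_divide_zero has_bochner_integral_diff h2p h2m)
  have "has_bochner_integral M (\<lambda>\<omega>. ((cmod (Yp \<omega>))^4 - 2 * ((cmod (Yp \<omega>))^2 * (cmod (Ym \<omega>))^2) + (cmod (Ym \<omega>))^4) / \<eta>^2)
      ((2 * A^2 - 2 * (A * B) + 2 * B^2) / \<eta>^2)"
    by (intro has_bochner_integral_divide_zero has_bochner_integral_add has_bochner_integral_diff
        has_bochner_integral_mult_right h4p h4m hpm)
  moreover have "(\<lambda>\<omega>. ((cmod (Yp \<omega>))^4 - 2 * ((cmod (Yp \<omega>))^2 * (cmod (Ym \<omega>))^2) + (cmod (Ym \<omega>))^4) / \<eta>^2)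
      = (\<lambda>\<omega>. (((cmod (Yp \<omega>))^2 - (cmod (Ym \<omega>))^2) / \<eta>)^2)"
    by (rule ext) (simp add: power_divide power2_eq_square power4_eq_xxxx algebra_simps)
  ultimately have hs2: "has_bochner_integral M (\<lambda>\<omega>. (((cmod (Yp \<omega>))^2 - (cmod (Ym \<omega>))^2) / \<eta>)^2)
      ((2 * A^2 - 2 * (A * B) + 2 * B^2) / \<eta>^2)" by simp
  have ds: "Sp - Sm = (\<Sum>k=1..K. u k)"
    unfolding Sp_def Sm_def sum_subtractf[symmetric] by (rule sum.cong) auto
  have as: "Sp + Sm = (\<Sum>k=1..K. \<bar>u k\<bar>)"
    unfolding Sp_def Sm_def sum.distrib[symmetric] by (rule sum.cong) auto
  have E1: "(A - B) / \<eta> = (\<Sum>k=1..K. u k)"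
    using assms(3) ds by (simp add: A_def B_def field_simps)
  have V1: "(2 * A^2 - 2 * (A * B) + 2 * B^2) / \<eta>^2 - ((A - B) / \<eta>)^2
      = Sp\<^sup>2 + Sm\<^sup>2 + 2 * \<sigma>z2 / \<eta> * (\<Sum>k=1..K. \<bar>u k\<bar>) + 2 * \<sigma>z2\<^sup>2 / \<eta>\<^sup>2"
    unfolding as[symmetric] A_def B_def using assms(3)
    by (simp add: field_simps power2_eq_square)
  show ?thesis
    unfolding Let_def eyp eym Sp_def[symmetric] Sm_def[symmetric]
  proof (intro conjI)
    show i1: "integrable M (\<lambda>\<omega>. ((cmod (Yp \<omega>))^2 - (cmod (Ym \<omega>))^2) / \<eta>)"
      using hs by (simp add: has_bochner_integral_iff)
    show i2: "integrable M (\<lambda>\<omega>. (((cmod (Yp \<omega>))^2 - (cmod (Ym \<omega>))^2) / \<eta>)^2)"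
      using hs2 by (simp add: has_bochner_integral_iff)
    have e1: "expectation (\<lambda>\<omega>. ((cmod (Yp \<omega>))^2 - (cmod (Ym \<omega>))^2) / \<eta>) = (A - B) / \<eta>"
      using hs by (simp add: has_bochner_integral_iff)
    then show "expectation (\<lambda>\<omega>. ((cmod (Yp \<omega>))^2 - (cmod (Ym \<omega>))^2) / \<eta>) = (\<Sum>k=1..K. u k)"
      using E1 by simp
    have e2: "expectation (\<lambda>\<omega>. (((cmod (Yp \<omega>))^2 - (cmod (Ym \<omega>))^2) / \<eta>)^2) = (2 * A^2 - 2 * (A * B) + 2 * B^2) / \<eta>^2"
      using hs2 by (simp add: has_bochner_integral_iff)
    show "variance (\<lambda>\<omega>. ((cmod (Yp \<omega>))^2 - (cmod (Ym \<omega>))^2) / \<eta>) =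
      Sp\<^sup>2 + Sm\<^sup>2 + 2 * \<sigma>z2 / \<eta> * (\<Sum>k=1..K. \<bar>u k\<bar>) + 2 * \<sigma>z2\<^sup>2 / \<eta>\<^sup>2"
    proof -
      have "variance (\<lambda>\<omega>. ((cmod (Yp \<omega>))^2 - (cmod (Ym \<omega>))^2) / \<eta>) =
        expectation (\<lambda>\<omega>. (((cmod (Yp \<omega>))^2 - (cmod (Ym \<omega>))^2) / \<eta>)^2) - (expectation (\<lambda>\<omega>. ((cmod (Yp \<omega>))^2 - (cmod (Ym \<omega>))^2) / \<eta>))^2"
        by (rule variance_eq[OF i1 i2])
      also have "\<dots> = (2 * A^2 - 2 * (A * B) + 2 * B^2) / \<eta>^2 - ((A - B) / \<eta>)^2"
        by (simp only: e1 e2)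
      also have "\<dots> = Sp\<^sup>2 + Sm\<^sup>2 + 2 * \<sigma>z2 / \<eta> * (\<Sum>k=1..K. \<bar>u k\<bar>) + 2 * \<sigma>z2\<^sup>2 / \<eta>\<^sup>2"
        by (rule V1)
      finally show ?thesis .
    qed
  qed
qed


end
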